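(* Every enhanced Gelfand--Zetlin pattern of rank zero is efficient.
   Context: Let $\lambda=(\lambda_1\ge\dots\ge\lambda_n)$ be a partition. A GZ pattern with top row $\lambda$ is an integer array $a_{ij}$, $0\le i\le n-1$, $1\le j\le n-i$, with $a_{0j}=\lambda_{n+1-j}$ and $a_{i-1,j}\le a_{ij}\le a_{i-1,j+1}$ ($a_{ij}$ sits below $a_{i-1,j}$ and $a_{i-1,j+1}$). An enhanced GZ pattern is such an array with a set of encircled entries and a set of edges, each joining an $a_{ij}$ ($i\ge1$) with $a_{i-1,j}$ or $a_{i-1,j+1}$, such that: (1) row $0$ entries are encircled; (2) entries joined by an edge are equal and the lower one is encircled; (3) for $i\ge1$, $1\le j\le n-i-1$: both $a_{ij},a_{i,j+1}$ are joined to $a_{i-1,j+1}$ iff both are joined to $a_{i+1,j}$; (4) if $a_{0j}=a_{0,j+1}$ then $a_{1j}$ is encircled and joined to both; (5) if $a_{i-1,j}<a_{i-1,j+1}$ and $a_{ij}=a_{i-1,j}$, then $a_{ij}$ is encircled and joined to $a_{i-1,j}$; (6) if $a_{i-1,j}<a_{i-1,j+1}$, $a_{ij}=a_{i-1,j+1}$ and $a_{ij}$ is encircled, then it is joined to $a_{i-1,j+1}$; (7) if $a_{i-1,j}=a_{i-1,j+1}=a_{ij}$ and $a_{i-1,j},a_{i-1,j+1}$ can be connected by a path of edges, then $a_{ij}$ is encircled and joined to both; (8) if $a_{i-1,j}=a_{i-1,j+1}=a_{ij}$ and $a_{ij}$ is encircled, then it is joined to at least one of them. The rank is the number of non-encircled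 entries. The pattern is inefficient if it contains $a_{i-1,j}=a_{i-1,j+1}=a_{ij}$ with no edge between $a_{ij}$ and $a_{i-1,j+1}$, and efficient otherwise. *)

theory Defs
  imports Main
begin

type_synonym pos = "nat \<times> nat"

definition gz_pos :: "nat \<Rightarrow> pos set" where
  "gz_pos n = {(i, j). i < n \<and> 1 \<le> j \<and> j \<le> n - i}"

definition is_partition :: "nat \<Rightarrow> (nat \<Rightarrow> int) \<Rightarrow> bool" where
  "is_partition n lam \<longleftrightarrow> (\<forall>k. 1 \<le> k \<and> k < n \<longrightarrow> lam (Suc k) \<le> lam k) \<and> (n \<ge> 1 \<longrightarrow> 0 \<le> lam n)"

definition gz_pattern :: "nat \<Rightarrow> (nat \<Rightarrow> int) \<Rightarrow> (nat \<Rightarrow> nat \<Rightarrow> int) \<Rightarrow> bool" where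
  "gz_pattern n lam a \<longleftrightarrow>
     (\<forall>j. 1 \<le> j \<and> j \<le> n \<longrightarrow> a 0 j = lam (n + 1 - j)) \<and>
     (\<forall>i j. 1 \<le> i \<and> i < n \<and> 1 \<le> j \<and> j \<le> n - i \<longrightarrow>
        a (i - 1) j \<le> a i j \<and> a i j \<le> a (i - 1) (j + 1))"

text \<open>Edges are stored as pairs (lower entry, upper entry).
  A path of edges is a path in the undirected graph given by the edges.\<close>
definition enhanced_gz :: "nat \<Rightarrow> (nat \<Rightarrow> int) \<Rightarrow> (nat \<Rightarrow> nat \<Rightarrow> int)
    \<Rightarrow> pos set \<Rightarrow> (pos \<times> pos) set \<Rightarrow> bool" where
  "enhanced_gz n lam a C E \<longleftrightarrow>
     gz_pattern n lam a \<and>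
     C \<subseteq> gz_pos n \<and>
     (\<forall>e\<in>E. \<exists>i j. 1 \<le> i \<and> (i, j) \<in> gz_pos n \<and> fst e = (i, j) \<and>
                 (snd e = (i - 1, j) \<or> snd e = (i - 1, j + 1))) \<and>
     \<comment> \<open>(1)\<close>
     (\<forall>j. 1 \<le> j \<and> j \<le> n \<longrightarrow> (0, j) \<in> C) \<and>
     \<comment> \<open>(2)\<close>
     (\<forall>p q. (p, q) \<in> E \<longrightarrow> a (fst p) (snd p) = a (fst q) (snd q) \<and> p \<in> C) \<and>
     \<comment> \<open>(3)\<close>
     (\<forall>i j. 1 \<le> i \<and> 1 \<le> j \<and> j + 1 \<le> n - i \<longrightarrow>
        ((((i, j), (i - 1, j + 1)) \<in> E \<and> ((i, j + 1), (i - 1, j + 1)) \<in> E) \<longleftrightarrow>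
         (((i + 1, j), (i, j)) \<in> E \<and> ((i + 1, j), (i, j + 1)) \<in> E))) \<and>
     \<comment> \<open>(4)\<close>
     (\<forall>j. 1 \<le> j \<and> j + 1 \<le> n \<and> a 0 j = a 0 (j + 1) \<longrightarrow>
        (1, j) \<in> C \<and> ((1, j), (0, j)) \<in> E \<and> ((1, j), (0, j + 1)) \<in> E) \<and>
     \<comment> \<open>(5)--(8): for entries a_{ij} with i \<ge> 1\<close>
     (\<forall>i j. 1 \<le> i \<and> (i, j) \<in> gz_pos n \<longrightarrow>
        \<comment> \<open>(5)\<close>
        ((a (i - 1) j < a (i - 1) (j + 1) \<and> a i j = a (i - 1) j) \<longrightarrow>
           (i, j) \<in> C \<and> ((i, j), (i - 1, j)) \<in> E) \<and>
        \<comment> \<open>(6)\<close>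
        ((a (i - 1) j < a (i - 1) (j + 1) \<and> a i j = a (i - 1) (j + 1) \<and> (i, j) \<in> C) \<longrightarrow>
           ((i, j), (i - 1, j + 1)) \<in> E) \<and>
        \<comment> \<open>(7)\<close>
        ((a (i - 1) j = a (i - 1) (j + 1) \<and> a i j = a (i - 1) j \<and>
          ((i - 1, j), (i - 1, j + 1)) \<in> (E \<union> E\<inverse>)\<^sup>*) \<longrightarrow>
           (i, j) \<in> C \<and> ((i, j), (i - 1, j)) \<in> E \<and> ((i, j), (i - 1, j + 1)) \<in> E) \<and>
        \<comment> \<open>(8)\<close>
        ((a (i - 1) j = a (i - 1) (j + 1) \<and> a i j = a (i - 1) j \<and> (i, j) \<in> C) \<longrightarrow>
           ((i, j), (i - 1, j)) \<in> E \<or> ((i, j), (i - 1, j + 1)) \<in> E))"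

definition gz_rank :: "nat \<Rightarrow> pos set \<Rightarrow> nat" where
  "gz_rank n C = card (gz_pos n - C)"

definition inefficient :: "nat \<Rightarrow> (nat \<Rightarrow> nat \<Rightarrow> int) \<Rightarrow> (pos \<times> pos) set \<Rightarrow> bool" where
  "inefficient n a E \<longleftrightarrow>
     (\<exists>i j. 1 \<le> i \<and> (i, j) \<in> gz_pos n \<and>
        a (i - 1) j = a (i - 1) (j + 1) \<and> a i j = a (i - 1) j \<and>
        ((i, j), (i - 1, j + 1)) \<notin> E)"

definition efficient :: "nat \<Rightarrow> (nat \<Rightarrow> nat \<Rightarrow> int) \<Rightarrow> (pos \<times> pos) set \<Rightarrow> bool" where
  "efficient n a E \<longleftrightarrow> \<not> inefficient n a E"

end

theory Submission
  imports Defs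
begin

lemma gz_pos_finite: "finite (gz_pos n)"
proof -
  have "gz_pos n \<subseteq> {..<n} \<times> {..n}" by (auto simp: gz_pos_def)
  thus ?thesis by (rule finite_subset) auto
qed

lemma path_lemma:
  assumes enh: "enhanced_gz n lam a C E" and full: "gz_pos n \<subseteq> C"
  shows "1 \<le> j \<Longrightarrow> i < n \<Longrightarrow> j + 1 \<le> n - i \<Longrightarrow> a i j = a i (j + 1) \<Longrightarrow>
         ((i, j), (i, j + 1)) \<in> (E \<union> E\<inverse>)\<^sup>*"
proof (induction i arbitrary: j)
  case 0
  from enh have "((1, j), (0, j)) \<in> E \<and> ((1, j), (0, j + 1)) \<in> E"
    using 0 unfolding enhanced_gz_def by auto
  hence e1: "((0::nat, j), (1::nat, j)) \<in> (E \<union> E\<inverse>)" and e2: "((1::nat, j), (0::nat, j+1)) \<in> (E \<union> E\<inverse>)"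
    by auto
  show ?case using e1 e2 by (meson converse_rtrancl_into_rtrancl r_into_rtrancl)
next
  case (Suc i)
  have gz: "gz_pattern n lam a" using enh unfolding enhanced_gz_def by auto
  have p1: "(Suc i, j) \<in> gz_pos n" and p2: "(Suc i, j+1) \<in> gz_pos n"
    using Suc.prems by (auto simp: gz_pos_def)
  have i1: "a i j \<le> a (Suc i) j" "a (Suc i) j \<le> a i (j+1)"
  proof -
    have "1 \<le> Suc i \<and> Suc i < n \<and> 1 \<le> j \<and> j \<le> n - Suc i" using Suc.prems by auto
    hence "a (Suc i - 1) j \<le> a (Suc i) j \<and> a (Suc i) j \<le> a (Suc i - 1) (j+1)"
      using gz unfolding gz_pattern_def by blast
    thus "a i j \<le> a (Suc i) j" "a (Suc i) j \<le> a i (j+1)" by auto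
  qed
  have i2: "a i (j+1) \<le> a (Suc i) (j+1)" "a (Suc i) (j+1) \<le> a i (j+2)"
  proof -
    have "1 \<le> Suc i \<and> Suc i < n \<and> 1 \<le> j+1 \<and> j+1 \<le> n - Suc i" using Suc.prems by auto
    hence "a (Suc i - 1) (j+1) \<le> a (Suc i) (j+1) \<and> a (Suc i) (j+1) \<le> a (Suc i - 1) (j+1+1)"
      using gz unfolding gz_pattern_def by blast
    thus "a i (j+1) \<le> a (Suc i) (j+1)" "a (Suc i) (j+1) \<le> a i (j+2)" by auto
  qed
  have v: "a (Suc i) j = a i (j+1)" "a (Suc i) (j+1) = a i (j+1)"
    using i1 i2 Suc.prems by auto
  have R: "\<forall>i j. 1 \<le> i \<and> (i, j) \<in> gz_pos n \<longrightarrow>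
        ((a (i - 1) j < a (i - 1) (j + 1) \<and> a i j = a (i - 1) j) \<longrightarrow>
           (i, j) \<in> C \<and> ((i, j), (i - 1, j)) \<in> E) \<and>
        ((a (i - 1) j < a (i - 1) (j + 1) \<and> a i j = a (i - 1) (j + 1) \<and> (i, j) \<in> C) \<longrightarrow>
           ((i, j), (i - 1, j + 1)) \<in> E) \<and>
        ((a (i - 1) j = a (i - 1) (j + 1) \<and> a i j = a (i - 1) j \<and>
          ((i - 1, j), (i - 1, j + 1)) \<in> (E \<union> E\<inverse>)\<^sup>*) \<longrightarrow>
           (i, j) \<in> C \<and> ((i, j), (i - 1, j)) \<in> E \<and> ((i, j), (i - 1, j + 1)) \<in> E)"
    using enh unfolding enhanced_gz_def by blast
  have eA: "((Suc i, j), (i, j+1)) \<in> E"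
  proof (cases "a i j < a i (j+1)")
    case True
    thus ?thesis using R[rule_format, OF conjI[OF _ p1]] v full p1 by auto
  next
    case False
    hence eq: "a i j = a i (j+1)" using i1 by auto
    have "((i, j), (i, j + 1)) \<in> (E \<union> E\<inverse>)\<^sup>*"
      using Suc.IH[OF Suc.prems(1)] Suc.prems eq by auto
    thus ?thesis using R[rule_format, OF conjI[OF _ p1]] v eq by auto
  qed
  have eB: "((Suc i, j+1), (i, j+1)) \<in> E"
  proof (cases "a i (j+1) < a i (j+2)")
    case True
    thus ?thesis using R[rule_format, OF conjI[OF _ p2]] v by auto
  next
    case False
    hence eq: "a i (j+1) = a i (j+1+1)" using i2 v by auto
    have "((i, j+1), (i, j + 1 + 1)) \<in> (E \<union> E\<inverse>)\<^sup>*"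
      using Suc.IH[of "j+1"] Suc.prems eq by auto
    thus ?thesis using R[rule_format, OF conjI[OF _ p2]] v eq by auto
  qed
  have e1: "((Suc i, j), (i, j+1)) \<in> E \<union> E\<inverse>" using eA by auto
  have e2: "((i, j+1), (Suc i, j+1)) \<in> E \<union> E\<inverse>" using eB by auto
  show ?case using e1 e2 by (meson converse_rtrancl_into_rtrancl r_into_rtrancl)
qed

theorem proposition4p1:
  fixes n :: nat and lam :: "nat \<Rightarrow> int" and a :: "nat \<Rightarrow> nat \<Rightarrow> int"
    and C :: "(nat \<times> nat) set" and E :: "((nat \<times> nat) \<times> (nat \<times> nat)) set"
  assumes "is_partition n lam"
    and "enhanced_gz n lam a C E"
    and "gz_rank n C = 0"
  shows "efficient n a E"
proof -
  have "finite (gz_pos n - C)" using gz_pos_finite by auto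
  hence full: "gz_pos n \<subseteq> C" using assms(3) unfolding gz_rank_def by auto
  show ?thesis unfolding efficient_def inefficient_def
  proof
    assume "\<exists>i j. 1 \<le> i \<and> (i, j) \<in> gz_pos n \<and>
        a (i - 1) j = a (i - 1) (j + 1) \<and> a i j = a (i - 1) j \<and>
        ((i, j), (i - 1, j + 1)) \<notin> E"
    then obtain i j where h: "1 \<le> i" "(i, j) \<in> gz_pos n" "a (i - 1) j = a (i - 1) (j + 1)"
      "a i j = a (i - 1) j" "((i, j), (i - 1, j + 1)) \<notin> E" by blast
    have "((i - 1, j), (i - 1, j + 1)) \<in> (E \<union> E\<inverse>)\<^sup>*"
      using path_lemma[OF assms(2) full] h by (auto simp: gz_pos_def)
    moreover have "\<forall>i j. 1 \<le> i \<and> (i, j) \<in> gz_pos n \<longrightarrow>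
        ((a (i - 1) j = a (i - 1) (j + 1) \<and> a i j = a (i - 1) j \<and>
          ((i - 1, j), (i - 1, j + 1)) \<in> (E \<union> E\<inverse>)\<^sup>*) \<longrightarrow>
           (i, j) \<in> C \<and> ((i, j), (i - 1, j)) \<in> E \<and> ((i, j), (i - 1, j + 1)) \<in> E)"
      using assms(2) unfolding enhanced_gz_def by blast
    ultimately show False using h by blast
  qed
qed

end
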